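(* Let $A$ be a real $3\times3$ matrix whose only eigenvalue is $\lambda$ (with algebraic multiplicity $3$), and let $h>0$. If $\lambda=0$, set $\psi=1$, $\phi=h$, $\theta=\tfrac12$. If $\lambda\neq0$, set $$\phi=(h-\lambda h^2)e^{\lambda h},\qquad \theta=\frac{h^2e^{\lambda h}}{2\phi^2},\qquad \psi=e^{\lambda h}-\lambda\phi-\theta\phi^2\lambda^2.$$ Then (whenever these expressions are defined) the explicit difference scheme $$\frac{\mathbf{x}_{k+1}-\psi\mathbf{x}_k}{\phi}=A\mathbf{x}_k+\theta\phi A^2\mathbf{x}_k$$ is exact for the system $\mathbf{x}'=A\mathbf{x}$.
   Context: A one-step difference scheme with step size $h>0$ for $\mathbf{x}'=M\mathbf{x}$ is called exact if for every initial vector $\mathbf{x}_0$ the sequence $(\mathbf{x}_k)$ it generates satisfies $\mathbf{x}_k=\mathbf{x}(kh)$ for all $k\ge 0$, where $\mathbf{x}(t)$ solves $\mathbf{x}'=M\mathbf{x}$, $\mathbf{x}(0)=\mathbf{x}_0$. *)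

theory Defs
  imports "HOL-Analysis.Analysis" "HOL-Computational_Algebra.Polynomial"
begin

definition charpoly :: "'a::field ^'n::finite^'n \<Rightarrow> 'a poly" where
  "charpoly M = det ((\<chi> i j. if i = j then [:0, 1:] else 0) - (\<chi> i j. [:M $ i $ j:]))"

text \<open>A one-step difference scheme is given as a relation S xs k between consecutive
  iterates xs k and xs (Suc k).\<close>
definition exact_scheme ::
  "((nat \<Rightarrow> real^'n::finite) \<Rightarrow> nat \<Rightarrow> bool) \<Rightarrow> real \<Rightarrow> real^'n^'n \<Rightarrow> bool" where
  "exact_scheme S h M \<longleftrightarrow>
     (\<forall>xs x. (\<forall>k. S xs k) \<and> x 0 = xs 0 \<and>
             (\<forall>t. (x has_vector_derivative (M *v x t)) (at t))
        \<longrightarrow> (\<forall>k. xs k = x (real k * h)))"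

end

theory Submission
  imports Defs
begin


lemma poly_charpoly3:
  fixes A :: "real^3^3"
  shows "poly (charpoly A) x = det ((\<chi> i j. if i = j then x else 0) - A)"
  unfolding charpoly_def det_3 by (simp add: poly_mult algebra_simps)

lemma nil3:
  fixes N :: "real^3^3"
  assumes "\<And>y. det ((\<chi> i j. if i = j then y else 0) - N) = y^3"
  shows "N ** N ** N = 0"
proof -
  define d where "d = det N"
  define t where "t = N$1$1 + N$2$2 + N$3$3"
  define c where "c = N$1$1*N$2$2 - N$1$2*N$2$1 + N$1$1*N$3$3 - N$1$3*N$3$1 + N$2$2*N$3$3 - N$2$3*N$3$2"
  have e: "det ((\<chi> i j. if i = j then y else 0) - N) = y^3 - t*y^2 + c*y - d" for y
    unfolding det_3 d_def t_def c_def by (simp add: algebra_simps power2_eq_square power3_eq_cube)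
  have "d = 0" using e[of 0] assms[of 0] by simp
  moreover have "- t + c = 0" using e[of 1] assms[of 1] \<open>d = 0\<close> by simp
  moreover have "- t - c = 0" using e[of "-1"] assms[of "-1"] \<open>d = 0\<close> by simp
  ultimately have z: "t = 0" "c = 0" "d = 0" by linarith+
  have ch: "(N ** N ** N) $ i $ j = t * (N ** N)$i$j - c * N$i$j + d * (if i = j then 1 else 0)" for i j
    unfolding t_def c_def d_def det_3
    using exhaust_3[of i] exhaust_3[of j]
    by (auto simp: matrix_matrix_mult_def sum_3 algebra_simps)
  show ?thesis using ch z by (simp add: vec_eq_iff)
qed


definition Fv :: "real^3^3 \<Rightarrow> real^3 \<Rightarrow> real \<Rightarrow> real \<Rightarrow> real \<Rightarrow> real^3" where
  "Fv N v a b c = a *\<^sub>R v + b *\<^sub>R (N *v v) + c *\<^sub>R (N *v (N *v v))"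

lemma N3v: assumes "N ** N ** N = 0" shows "N *v (N *v (N *v v)) = 0"
  using assms by (simp add: matrix_vector_mul_assoc matrix_mul_assoc)

lemma Fv_add: "Fv N v a b c + Fv N v a' b' c' = Fv N v (a+a') (b+b') (c+c')"
  by (simp add: Fv_def algebra_simps)
lemma Fv_diff: "Fv N v a b c - Fv N v a' b' c' = Fv N v (a-a') (b-b') (c-c')"
  by (simp add: Fv_def algebra_simps)
lemma Fv_scale: "r *\<^sub>R Fv N v a b c = Fv N v (r*a) (r*b) (r*c)"
  by (simp add: Fv_def algebra_simps)
lemma Fv_arg_scale: "Fv N (r *\<^sub>R v) a b c = r *\<^sub>R Fv N v a b c"
  by (simp add: Fv_def algebra_simps)
lemma Fv_N: assumes "N ** N ** N = 0" shows "N *v Fv N v a b c = Fv N v 0 a b"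
  using N3v[OF assms] by (simp add: Fv_def algebra_simps)
lemma Fv_comp: assumes "N ** N ** N = 0"
  shows "Fv N (Fv N w a b c) a' b' c' = Fv N w (a'*a) (a'*b + b'*a) (a'*c + b'*b + c'*a)"
  using N3v[OF assms] by (simp add: Fv_def algebra_simps)
lemma Fv_cong: "a = a' \<Longrightarrow> b = b' \<Longrightarrow> c = c' \<Longrightarrow> Fv N v a b c = Fv N v a' b' c'" by simp
lemma Fv_1: "Fv N v 1 0 0 = v" by (simp add: Fv_def)
lemma Fv_0: "Fv N v 0 0 0 = 0" by (simp add: Fv_def)
lemma mat_v: "mat k *v w = k *\<^sub>R (w :: real^'n)"
  by (simp add: vec_eq_iff matrix_vector_mult_def mat_def if_distrib[where f="\<lambda>x. x * _"] cong: if_cong)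



lemma ode_sol:
  fixes A N :: "real^3^3" and x :: "real \<Rightarrow> real^3"
  assumes N3: "N ** N ** N = 0" and Av: "\<And>w. A *v w = lam *\<^sub>R w + N *v w"
    and dx: "\<And>t. (x has_vector_derivative (A *v x t)) (at t)"
  shows "x t = exp (lam*t) *\<^sub>R Fv N (x 0) 1 t (t^2/2)"
proof -
  define z where "z t = exp (-lam*t) *\<^sub>R (x t + (-t) *\<^sub>R (N *v x t) + (t^2/2) *\<^sub>R (N *v (N *v x t)))" for t
  have bl: "bounded_linear ((*v) N)" by simp
  have Nd: "((\<lambda>t. N *v g t) has_vector_derivative N *v g') F" if "(g has_vector_derivative g') F" for g g' F
    using bounded_linear.has_vector_derivative[OF bl that] .
  have d: "(z has_vector_derivative 0) (at s)" for s
  proof -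
    have h1: "((\<lambda>t. N *v x t) has_vector_derivative N *v (A *v x s)) (at s)" by (rule Nd[OF dx])
    have h2: "((\<lambda>t. N *v (N *v x t)) has_vector_derivative N *v (N *v (A *v x s))) (at s)" by (rule Nd[OF h1])
    have h3: "((\<lambda>t. -t) has_real_derivative -1) (at s)" by (auto intro!: derivative_eq_intros)
    have h4: "((\<lambda>t. t^2/2) has_real_derivative s) (at s)" by (auto intro!: derivative_eq_intros)
    have h5: "((\<lambda>t. exp (-lam*t)) has_field_derivative (- lam * exp (- lam * s))) (at s)" by (auto intro!: derivative_eq_intros)
    note hg = has_vector_derivative_add[OF has_vector_derivative_add[OF dx has_vector_derivative_scaleR[OF h3 h1]] has_vector_derivative_scaleR[OF h4 h2]]
    note hz = has_vector_derivative_scaleR[OF h5 hg]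
    show ?thesis unfolding z_def[abs_def]
      apply (rule has_vector_derivative_eq_rhs[OF hz])
      apply (simp add: Av algebra_simps N3v[OF N3])
      done
  qed
  obtain c where c: "\<And>t. t \<in> UNIV \<Longrightarrow> z t = c"
    using has_vector_derivative_zero_constant[of UNIV z] d by auto
  have "z t = z 0" using c by simp
  also have "z 0 = x 0" by (simp add: z_def)
  finally have "exp (-lam*t) *\<^sub>R Fv N (x t) 1 (-t) (t^2/2) = x 0"
    by (simp add: z_def Fv_def)
  hence e: "Fv N (x t) 1 (-t) (t^2/2) = exp (lam*t) *\<^sub>R x 0"
    by (metis (no_types, lifting) exp_minus_inverse mult_minus_left scaleR_one scaleR_scaleR)
  have "x t = Fv N (Fv N (x t) 1 (-t) (t^2/2)) 1 t (t^2/2)"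
    by (simp add: Fv_comp[OF N3] Fv_1 power2_eq_square)
  also have "\<dots> = exp (lam*t) *\<^sub>R Fv N (x 0) 1 t (t^2/2)"
    by (simp add: e Fv_arg_scale)
  finally show ?thesis .
qed


theorem mainTheorem14:
  fixes A :: "real^3^3" and lam h :: real
  assumes char: "charpoly A = [:-lam, 1:] ^ 3"
    and hpos: "h > 0"
    and defined: "lam \<noteq> 0 \<Longrightarrow> h - lam * h^2 \<noteq> 0"
  defines "\<phi> \<equiv> (if lam = 0 then h else (h - lam * h^2) * exp (lam * h))"
    and "\<theta> \<equiv> (if lam = 0 then 1/2 else h^2 * exp (lam * h) / (2 * ((h - lam * h^2) * exp (lam * h))^2))"
    and "\<psi> \<equiv> (if lam = 0 then 1 else exp (lam * h) - lam * ((h - lam * h^2) * exp (lam * h))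
           - (h^2 * exp (lam * h) / (2 * ((h - lam * h^2) * exp (lam * h))^2))
             * ((h - lam * h^2) * exp (lam * h))^2 * lam^2)"
  shows "exact_scheme
           (\<lambda>xs k. (1 / \<phi>) *\<^sub>R (xs (Suc k) - \<psi> *\<^sub>R xs k)
                    = A *v xs k + (\<theta> * \<phi>) *\<^sub>R (A *v (A *v xs k)))
           h A"
  proof -
  define N where "N = A - mat lam"
  have Av: "A *v w = lam *\<^sub>R w + N *v w" for w
    by (simp add: N_def matrix_vector_mult_diff_rdistrib mat_v)
  have dety: "det ((\<chi> i j. if i = j then y else 0) - N) = y^3" for y
  proof -
    have "poly (charpoly A) (y+lam) = y^3" using char by (simp add: poly_power)
    moreover have "(\<chi> i j. if i = j then y + lam else 0) - A = (\<chi> i j. if i = j then y else 0) - N"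
      by (simp add: vec_eq_iff N_def mat_def)
    ultimately show ?thesis using poly_charpoly3[of A "y+lam"] by simp
  qed
  have N3: "N ** N ** N = 0" by (rule nil3[OF dety])
  have phinz: "\<phi> \<noteq> 0" using hpos defined by (auto simp: \<phi>_def)
  have coef: "\<psi> + \<phi> * lam + \<phi> * (\<theta> * \<phi>) * lam^2 = exp (lam*h) * 1
     \<and> \<phi> + \<phi> * (\<theta> * \<phi>) * (2*lam) = exp (lam*h) * h
     \<and> \<phi> * (\<theta> * \<phi>) = exp (lam*h) * (h^2/2)"
  proof (cases "lam = 0")
    case True then show ?thesis by (simp add: \<phi>_def \<theta>_def \<psi>_def power2_eq_square)
  next
    case False
    have p: "(h - lam * h^2) * exp (lam * h) \<noteq> 0" using defined[OF False] by simp
    define e where "e = exp (lam * h)"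
    define p where "p = (h - lam * h^2) * e"
    have pnz: "p \<noteq> 0" using p by (simp add: p_def e_def)
    have ph: "\<phi> = p" using False by (simp add: \<phi>_def p_def e_def)
    have th: "\<theta> = h^2 * e / (2 * p^2)" using False by (simp add: \<theta>_def p_def e_def)
    have c1: "h^2 * e / (2 * p^2) * p^2 = h^2/2 * e" using pnz by (simp add: field_simps)
    have ps: "\<psi> = e - lam * p - h^2/2 * e * lam^2" using False c1 by (simp add: \<psi>_def p_def e_def)
    have c2: "\<phi> * (\<theta> * \<phi>) = h^2/2 * e" using pnz c1 unfolding ph th
      by (simp add: power2_eq_square algebra_simps)
    show ?thesis unfolding c2 ps unfolding ph e_def[symmetric] p_def
      by (simp add: algebra_simps power2_eq_square)
  qed
  have AFv: "A *v v = Fv N v lam 1 0" for v by (simp add: Av Fv_def)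
  have AAFv: "A *v Fv N v lam 1 0 = Fv N v (lam^2) (2*lam) 1" for v
    by (simp add: AFv Fv_comp[OF N3] power2_eq_square)
  have key: "\<psi> *\<^sub>R v + \<phi> *\<^sub>R (A *v v + (\<theta>*\<phi>) *\<^sub>R (A *v (A *v v))) = exp (lam*h) *\<^sub>R Fv N v 1 h (h^2/2)" for v
  proof -
    have "\<psi> *\<^sub>R v + \<phi> *\<^sub>R (A *v v + (\<theta>*\<phi>) *\<^sub>R (A *v (A *v v)))
      = \<psi> *\<^sub>R Fv N v 1 0 0 + \<phi> *\<^sub>R (Fv N v lam 1 0 + (\<theta>*\<phi>) *\<^sub>R Fv N v (lam^2) (2*lam) 1)"
      by (simp add: AFv Fv_comp[OF N3] power2_eq_square Fv_1)
    also have "\<dots> = Fv N v (\<psi> + \<phi> * lam + \<phi> * (\<theta> * \<phi>) * lam^2) (\<phi> + \<phi> * (\<theta> * \<phi>) * (2*lam)) (\<phi> * (\<theta> * \<phi>))"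
      by (simp add: Fv_scale Fv_add algebra_simps)
    also have "\<dots> = exp (lam*h) *\<^sub>R Fv N v 1 h (h^2/2)"
      unfolding Fv_scale using coef by (intro Fv_cong[OF conjunct1[OF coef] conjunct1[OF conjunct2[OF coef]] conjunct2[OF conjunct2[OF coef]]])
    finally show ?thesis .
  qed
  show ?thesis unfolding exact_scheme_def
  proof (intro allI impI, elim conjE)
    fix xs :: "nat \<Rightarrow> real^3" and x :: "real \<Rightarrow> real^3"
    assume S: "\<forall>k. (1 / \<phi>) *\<^sub>R (xs (Suc k) - \<psi> *\<^sub>R xs k) = A *v xs k + (\<theta> * \<phi>) *\<^sub>R (A *v (A *v xs k))"
      and init: "x 0 = xs 0" and dx: "\<forall>t. (x has_vector_derivative A *v x t) (at t)"
    have sol: "x t = exp (lam*t) *\<^sub>R Fv N (x 0) 1 t (t^2/2)" for t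
      by (rule ode_sol[OF N3 Av]) (use dx in auto)
    have step: "xs (Suc k) = exp (lam*h) *\<^sub>R Fv N (xs k) 1 h (h^2/2)" for k
    proof -
      have "xs (Suc k) - \<psi> *\<^sub>R xs k = \<phi> *\<^sub>R (A *v xs k + (\<theta> * \<phi>) *\<^sub>R (A *v (A *v xs k)))"
      proof -
        have "xs (Suc k) - \<psi> *\<^sub>R xs k = \<phi> *\<^sub>R ((1 / \<phi>) *\<^sub>R (xs (Suc k) - \<psi> *\<^sub>R xs k))"
          using phinz by simp
        then show ?thesis using S by simp
      qed
      hence "xs (Suc k) = \<psi> *\<^sub>R xs k + \<phi> *\<^sub>R (A *v xs k + (\<theta> * \<phi>) *\<^sub>R (A *v (A *v xs k)))"
        by (simp add: algebra_simps)
      with key show ?thesis by simp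
    qed
    have ind: "xs k = exp (lam*(real k*h)) *\<^sub>R Fv N (xs 0) 1 (real k*h) ((real k*h)^2/2)" for k
    proof (induction k)
      case 0 then show ?case by (simp add: Fv_1)
    next
      case (Suc k)
      have "xs (Suc k) = exp (lam*h) *\<^sub>R Fv N (xs k) 1 h (h^2/2)" by (rule step)
      also have "\<dots> = (exp (lam*h) * exp (lam*(real k*h))) *\<^sub>R Fv N (Fv N (xs 0) 1 (real k*h) ((real k*h)^2/2)) 1 h (h^2/2)"
        by (simp add: Suc Fv_arg_scale)
      also have "\<dots> = exp (lam*(real (Suc k)*h)) *\<^sub>R Fv N (xs 0) 1 (real (Suc k)*h) ((real (Suc k)*h)^2/2)"
      proof -
        have ee: "exp (lam*h) * exp (lam*(real k*h)) = exp (lam*(real (Suc k)*h))"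
          by (simp add: exp_add[symmetric] algebra_simps)
        show ?thesis unfolding ee Fv_comp[OF N3]
          by (rule arg_cong[where f="\<lambda>u. _ *\<^sub>R u"], rule Fv_cong) (simp_all add: algebra_simps power2_eq_square add_divide_distrib)
      qed
      finally show ?case .
    qed
    fix k
    show "xs k = x (real k * h)"
      by (metis ind sol init)
  qed
qed

end
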